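(* Let $T=(T_a,T_b)$ be a rooted binary phylogenetic $X$-tree with strictly positive edge lengths and maximal pendant subtrees $T_a,T_b$ with leaf sets $X_a,X_b$. Let $X'\subset X$ be such that $X_a\not\subseteq X'$ and $X_b\not\subseteq X'$, and let $\widetilde T=T_{\widetilde X}$ with $\widetilde X=X\setminus X'$. Then $FP_T(x)\leq FP_{\widetilde T}(x)$ for all $x\in\widetilde X$.
   Context: A rooted binary phylogenetic $X$-tree ($X$ finite, $|X|\ge 2$ here) is a rooted tree whose root $\rho$ has in-degree 0 and out-degree 2, all edges directed away from $\rho$, all other interior vertices have in-degree 1 and out-degree 2, and whose leaves are bijectively labelled by $X$. $T=(T_a,T_b)$ denotes the decomposition into the two maximal pendant subtrees rooted at the children $a,b$ of $\rho$, with leaf sets $X_a,X_b$. Every edge $e$ has a strictly positive length $\lambda_e$. The Fair Proportion index of $x\in X$ is $FP_T(x)=\sum_{e\in P(T;\rho,x)}\lambda_e/D_e$, where $P(T;\rho,x)$ is the path from $\rho$ to $x$ and $D_e$ is the number of leaves descended from $e$. For $Y\subseteq X$, the induced subtree $T_Y$ is obtained from the minimal subtree of $T$ connecting $Y$ by suppressing all non-root vertices of in- and out-degree 1, adding the lengths of merged edges; if the root then has out-degree 1, it and its incident edge are deleted. *)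

theory Defs
  imports Complex_Main
begin

text \<open>A node has exactly two
children; each child is paired with the (positive) length of the edge from the
node to that child.  The root has no incoming edge.\<close>

datatype 'a ptree = Leaf 'a | Node "real \<times> 'a ptree" "real \<times> 'a ptree"

fun leaves :: "'a ptree \<Rightarrow> 'a list" where
  "leaves (Leaf x) = [x]"
| "leaves (Node (l1, t1) (l2, t2)) = leaves t1 @ leaves t2"

fun pos_lengths :: "'a ptree \<Rightarrow> bool" where
  "pos_lengths (Leaf x) = True"
| "pos_lengths (Node (l1, t1) (l2, t2)) =
     (l1 > 0 \<and> l2 > 0 \<and> pos_lengths t1 \<and> pos_lengths t2)"

definition phylo :: "'a ptree \<Rightarrow> bool" where
  "phylo T \<longleftrightarrow> distinct (leaves T) \<and> pos_lengths T"

text \<open>Fair Proportion index: sum over the edges e on the path from the root to x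
of lambda_e / D_e, where D_e is the number of leaves below e.\<close>
fun FP :: "'a ptree \<Rightarrow> 'a \<Rightarrow> real" where
  "FP (Leaf y) x = 0"
| "FP (Node (l1, t1) (l2, t2)) x =
     (if x \<in> set (leaves t1) then l1 / real (card (set (leaves t1))) + FP t1 x
      else if x \<in> set (leaves t2) then l2 / real (card (set (leaves t2))) + FP t2 x
      else 0)"

text \<open>Restriction of a planted subtree (incoming edge of length l, subtree t) to Y:
minimal connecting subtree with degree-2 vertices suppressed (lengths added).\<close>
fun restrE :: "'a set \<Rightarrow> real \<times> 'a ptree \<Rightarrow> (real \<times> 'a ptree) option" where
  "restrE Y (l, Leaf y) = (if y \<in> Y then Some (l, Leaf y) else None)"
| "restrE Y (l, Node c1 c2) =
     (case (restrE Y c1, restrE Y c2) of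
        (None, None) \<Rightarrow> None
      | (Some (l1, t1), None) \<Rightarrow> Some (l + l1, t1)
      | (None, Some (l2, t2)) \<Rightarrow> Some (l + l2, t2)
      | (Some a, Some b) \<Rightarrow> Some (l, Node a b))"

text \<open>Induced subtree T_Y; if the root ends with out-degree 1, it and its
incident edge are deleted.  None if Y contains no leaf of T.\<close>
fun restr :: "'a set \<Rightarrow> 'a ptree \<Rightarrow> 'a ptree option" where
  "restr Y (Leaf y) = (if y \<in> Y then Some (Leaf y) else None)"
| "restr Y (Node c1 c2) =
     (case (restrE Y c1, restrE Y c2) of
        (None, None) \<Rightarrow> None
      | (Some (l1, t1), None) \<Rightarrow> Some t1
      | (None, Some (l2, t2)) \<Rightarrow> Some t2
      | (Some a, Some b) \<Rightarrow> Some (Node a b))"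

end

theory Submission
  imports Defs
begin

lemma restrE_None: "restrE Y (l,t) = None \<longleftrightarrow> set (leaves t) \<inter> Y = {}"
proof (induction t arbitrary: l rule: leaves.induct)
  case (1 x)
  then show ?case by auto
next
  case (2 l1 t1 l2 t2)
  show ?case
  proof (cases "restrE Y (l1,t1)")
    case None
    then show ?thesis using "2.IH"(1)[of l1] "2.IH"(2)[of l2]
      by (cases "restrE Y (l2,t2)") auto
  next
    case (Some a)
    then show ?thesis using "2.IH"(1)[of l1] "2.IH"(2)[of l2]
      by (cases a; cases "restrE Y (l2,t2)") auto
  qed
qed

lemma restrE_Some: "restrE Y (l,t) = Some (l',t') \<Longrightarrow> set (leaves t') = set (leaves t) \<inter> Y"
proof (induction t arbitrary: l l' t' rule: leaves.induct)
  case (1 x)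
  then show ?case by (auto split: if_splits)
next
  case (2 l1 t1 l2 t2)
  show ?case
  proof (cases "restrE Y (l1,t1)")
    case None
    then have e1: "set (leaves t1) \<inter> Y = {}" using restrE_None[of Y] by simp
    show ?thesis
    proof (cases "restrE Y (l2,t2)")
      case None
      then show ?thesis using "2.prems" \<open>restrE Y (l1,t1) = None\<close> by simp
    next
      case (Some b)
      obtain a2 s2 where r2: "restrE Y (l2,t2) = Some (a2,s2)" using Some by (cases b) auto
      then have "t' = s2" using "2.prems" None by simp
      then show ?thesis using "2.IH"(2)[OF r2] e1 by auto
    qed
  next
    case (Some a)
    obtain a1 s1 where r1: "restrE Y (l1,t1) = Some (a1,s1)" using Some by (cases a) auto
    show ?thesis
    proof (cases "restrE Y (l2,t2)")
      case None
      then have e2: "set (leaves t2) \<inter> Y = {}" using restrE_None[of Y] by simp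
      have "t' = s1" using "2.prems" None r1 by simp
      then show ?thesis using "2.IH"(1)[OF r1] e2 by auto
    next
      case (Some b)
      obtain a2 s2 where r2: "restrE Y (l2,t2) = Some (a2,s2)" using Some by (cases b) auto
      then have "t' = Node (a1,s1) (a2,s2)" using "2.prems" r1 by simp
      then show ?thesis using "2.IH"(1)[OF r1] "2.IH"(2)[OF r2] by auto
    qed
  qed
qed

lemma card_pos: "card (set (leaves t)) > 0"
  by (induction t rule: leaves.induct) (auto simp: card_gt_0_iff)

lemma main:
  assumes "pos_lengths t" "distinct (leaves t)" "l \<ge> 0" "x \<in> set (leaves t)" "x \<in> Y"
    "restrE Y (l,t) = Some (l',t')"
  shows "l / card (set (leaves t)) + FP t x \<le> l' / card (set (leaves t')) + FP t' x"
  using assms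
proof (induction t arbitrary: l l' t' rule: leaves.induct)
  case (1 y)
  then show ?case by (auto split: if_splits)
next
  case (2 l1 t1 l2 t2)
  let ?t = "Node (l1, t1) (l2, t2)"
  have ct: "card (set (leaves ?t)) > 0" by (rule card_pos)
  have mono: "l / card (set (leaves ?t)) \<le> l / card (set (leaves s))"
    if "set (leaves s) \<subseteq> set (leaves ?t)" "card (set (leaves s)) > 0" for s
  proof -
    have "card (set (leaves s)) \<le> card (set (leaves ?t))"
      using that by (intro card_mono) auto
    then show ?thesis using that "2.prems"(3) ct
      by (intro divide_left_mono) auto
  qed
  from "2.prems" have p1: "l1 > 0" "l2 > 0" "pos_lengths t1" "pos_lengths t2"
    and d: "distinct (leaves t1)" "distinct (leaves t2)"
      "set (leaves t1) \<inter> set (leaves t2) = {}" by auto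
  show ?case
  proof (cases "x \<in> set (leaves t1)")
    case True
    then have xn2: "x \<notin> set (leaves t2)" using d by auto
    obtain a1 s1 where r1: "restrE Y (l1,t1) = Some (a1,s1)"
      using restrE_None[of Y l1 t1] True "2.prems"(5) by (cases "restrE Y (l1,t1)") auto
    have L1: "set (leaves s1) = set (leaves t1) \<inter> Y" using restrE_Some[OF r1] .
    have xs1: "x \<in> set (leaves s1)" using L1 True "2.prems"(5) by auto
    have cs1: "card (set (leaves s1)) > 0" by (rule card_pos)
    have IH: "l1 / card (set (leaves t1)) + FP t1 x \<le> a1 / card (set (leaves s1)) + FP s1 x"
      using "2.IH"(1)[OF p1(3) d(1) _ True "2.prems"(5) r1] p1 by auto
    have sub1: "set (leaves s1) \<subseteq> set (leaves ?t)" using L1 by auto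
    have LHS: "FP ?t x = l1 / card (set (leaves t1)) + FP t1 x" using True by simp
    show ?thesis
    proof (cases "restrE Y (l2,t2)")
      case None
      then have "l' = l + a1" "t' = s1" using "2.prems"(6) r1 by auto
      then show ?thesis using IH mono[OF sub1 cs1] LHS
        by (simp add: add_divide_distrib)
    next
      case (Some b)
      obtain a2 s2 where r2: "restrE Y (l2,t2) = Some (a2,s2)" using Some by (cases b) auto
      have L2: "set (leaves s2) = set (leaves t2) \<inter> Y" using restrE_Some[OF r2] .
      have eq: "l' = l" "t' = Node (a1,s1) (a2,s2)" using "2.prems"(6) r1 r2 by auto
      have sub: "set (leaves t') \<subseteq> set (leaves ?t)" using eq L1 L2 by auto
      have "FP t' x = a1 / card (set (leaves s1)) + FP s1 x" using eq xs1 by simp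
      then show ?thesis using IH mono[OF sub card_pos] LHS eq by simp
    qed
  next
    case False
    then have x2: "x \<in> set (leaves t2)" using "2.prems"(4) by auto
    obtain a2 s2 where r2: "restrE Y (l2,t2) = Some (a2,s2)"
      using restrE_None[of Y l2 t2] x2 "2.prems"(5) by (cases "restrE Y (l2,t2)") auto
    have L2: "set (leaves s2) = set (leaves t2) \<inter> Y" using restrE_Some[OF r2] .
    have xs2: "x \<in> set (leaves s2)" using L2 x2 "2.prems"(5) by auto
    have cs2: "card (set (leaves s2)) > 0" by (rule card_pos)
    have IH: "l2 / card (set (leaves t2)) + FP t2 x \<le> a2 / card (set (leaves s2)) + FP s2 x"
      using "2.IH"(2)[OF p1(4) d(2) _ x2 "2.prems"(5) r2] p1 by auto
    have sub2: "set (leaves s2) \<subseteq> set (leaves ?t)" using L2 by auto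
    have LHS: "FP ?t x = l2 / card (set (leaves t2)) + FP t2 x" using False x2 by simp
    show ?thesis
    proof (cases "restrE Y (l1,t1)")
      case None
      then have "l' = l + a2" "t' = s2" using "2.prems"(6) r2 by auto
      then show ?thesis using IH mono[OF sub2 cs2] LHS
        by (simp add: add_divide_distrib)
    next
      case (Some b)
      obtain a1 s1 where r1: "restrE Y (l1,t1) = Some (a1,s1)" using Some by (cases b) auto
      have L1: "set (leaves s1) = set (leaves t1) \<inter> Y" using restrE_Some[OF r1] .
      have xn1: "x \<notin> set (leaves s1)" using L1 False by auto
      have eq: "l' = l" "t' = Node (a1,s1) (a2,s2)" using "2.prems"(6) r1 r2 by auto
      have sub: "set (leaves t') \<subseteq> set (leaves ?t)" using eq L1 L2 by auto
      have "FP t' x = a2 / card (set (leaves s2)) + FP s2 x" using eq xs2 xn1 by simp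
      then show ?thesis using IH mono[OF sub card_pos] LHS eq by simp
    qed
  qed
qed

theorem lemma1:
  fixes T Ta Tb :: "'a ptree" and la lb :: real and X' :: "'a set"
  assumes "phylo T"
    and "T = Node (la, Ta) (lb, Tb)"
    and "X' \<subseteq> set (leaves T)"
    and "\<not> set (leaves Ta) \<subseteq> X'"
    and "\<not> set (leaves Tb) \<subseteq> X'"
  shows "\<forall>x \<in> set (leaves T) - X'.
           FP T x \<le> FP (the (restr (set (leaves T) - X') T)) x"
proof
  fix x assume x: "x \<in> set (leaves T) - X'"
  define Y where "Y = set (leaves T) - X'"
  have ph: "pos_lengths Ta" "pos_lengths Tb" "la > 0" "lb > 0"
    "distinct (leaves Ta)" "distinct (leaves Tb)" "set (leaves Ta) \<inter> set (leaves Tb) = {}"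
    using assms(1,2) by (auto simp: phylo_def)
  obtain a1 s1 where r1: "restrE Y (la,Ta) = Some (a1,s1)"
    using restrE_None[of Y la Ta] assms(2,4) Y_def by (cases "restrE Y (la,Ta)") auto
  obtain a2 s2 where r2: "restrE Y (lb,Tb) = Some (a2,s2)"
    using restrE_None[of Y lb Tb] assms(2,5) Y_def by (cases "restrE Y (lb,Tb)") auto
  have R: "the (restr Y T) = Node (a1,s1) (a2,s2)" using r1 r2 assms(2) by simp
  have L1: "set (leaves s1) = set (leaves Ta) \<inter> Y" using restrE_Some[OF r1] .
  have L2: "set (leaves s2) = set (leaves Tb) \<inter> Y" using restrE_Some[OF r2] .
  have xY: "x \<in> Y" using x Y_def by auto
  show "FP T x \<le> FP (the (restr (set (leaves T) - X') T)) x"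
  proof (cases "x \<in> set (leaves Ta)")
    case True
    have "la / card (set (leaves Ta)) + FP Ta x \<le> a1 / card (set (leaves s1)) + FP s1 x"
      using main[OF ph(1) ph(5) _ True xY r1] ph by auto
    moreover have "x \<in> set (leaves s1)" using L1 True xY by auto
    ultimately show ?thesis using R True assms(2) Y_def by simp
  next
    case False
    then have x2: "x \<in> set (leaves Tb)" using x assms(2) by auto
    have "lb / card (set (leaves Tb)) + FP Tb x \<le> a2 / card (set (leaves s2)) + FP s2 x"
      using main[OF ph(2) ph(6) _ x2 xY r2] ph by auto
    moreover have "x \<in> set (leaves s2)" "x \<notin> set (leaves s1)" using L2 L1 x2 False xY by auto
    ultimately show ?thesis using R False x2 assms(2) Y_def by simp
  qed
qed

end
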